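(* Let $A,B\in\mathbb{C}^{n\times n}$. The following are equivalent: (i) $A\leq^{GD1}B$; (ii) $A =AA^-B=BA^{GD}A$ for some $A^- \in A\{1\}$ and some $A^{GD} \in A\{GD\}$; (iii) $A = AA^{GD1}B=BA^{GD1}A$ for some GD1 inverse $A^{GD1}$ of $A$; (iv) for some $A^- \in A\{1\}$ and some $A^{GD} \in A\{GD\}$ there exist idempotents $P,Q\in\mathbb{C}^{n\times n}$ such that $R(P)=R(A)$, $N(P)=N(AA^-)$, $R(Q)=R(A^{GD}A)$, $N(Q)=N(A)$ and $A=PB=BQ$; (v) for some GD1 inverse $A^{GD1}$ of $A$ there exist idempotents $P,Q\in\mathbb{C}^{n\times n}$ such that $R(P)=R(A)$, $N(P)=N(A^{GD1})$, $R(Q)=R(A^{GD1})$, $N(Q)=N(A)$ and $A=PB=BQ$.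
   Context: For $A\in\mathbb{C}^{n\times n}$, $ind(A)$ is the smallest nonnegative integer $k$ with $\mathrm{rank}(A^k)=\mathrm{rank}(A^{k+1})$. $A\{1\}$ is the set of matrices $X$ with $AXA=A$. With $k=ind(A)$, $A\{GD\}$ is the set of matrices $X$ with $AXA=A$, $XA^{k+1}=A^k$, $A^{k+1}X=A^k$ (G-Drazin inverses). A GD1 inverse of $A$ is a matrix $A^{GD1}=A^{GD}AA^-$ with $A^-\in A\{1\}$, $A^{GD}\in A\{GD\}$. We write $A\leq^{GD1}B$ if $AA^{GD1}=BA^{GD1}$ and $A^{GD1}A=A^{GD1}B$ for some GD1 inverse $A^{GD1}$ of $A$. $R(\cdot)$, $N(\cdot)$ denote range and null space. *)

theory Defs
  imports "HOL-Analysis.Analysis"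
begin

definition matpow :: "complex^'n^'n \<Rightarrow> nat \<Rightarrow> complex^'n^'n" where
  "matpow A k = ((\<lambda>X. X ** A) ^^ k) (mat 1)"

definition ind :: "complex^'n^'n \<Rightarrow> nat" where
  "ind A = (LEAST k. rank (matpow A k) = rank (matpow A (Suc k)))"

definition inv1 :: "complex^'n^'n \<Rightarrow> (complex^'n^'n) set" where
  "inv1 A = {X. A ** X ** A = A}"

definition GDinv :: "complex^'n^'n \<Rightarrow> (complex^'n^'n) set" where
  "GDinv A = {X. A ** X ** A = A \<and> X ** matpow A (Suc (ind A)) = matpow A (ind A)
                \<and> matpow A (Suc (ind A)) ** X = matpow A (ind A)}"

definition GD1inv :: "complex^'n^'n \<Rightarrow> (complex^'n^'n) set" where
  "GD1inv A = {G ** A ** M | G M. G \<in> GDinv A \<and> M \<in> inv1 A}"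

definition gd1_le :: "complex^'n^'n \<Rightarrow> complex^'n^'n \<Rightarrow> bool" where
  "gd1_le A B \<longleftrightarrow> (\<exists>X \<in> GD1inv A. A ** X = B ** X \<and> X ** A = X ** B)"

definition idempotent_mat :: "complex^'n^'n \<Rightarrow> bool" where
  "idempotent_mat P \<longleftrightarrow> P ** P = P"

definition mrange :: "complex^'n^'n \<Rightarrow> (complex^'n) set" where
  "mrange A = range (\<lambda>x. A *v x)"

definition mnull :: "complex^'n^'n \<Rightarrow> (complex^'n) set" where
  "mnull A = {x. A *v x = 0}"

end

theory Submission
  imports Defs
begin

lemma idem_eq:
  fixes P E :: "complex^'n^'n"
  assumes "P ** P = P" "E ** E = E" "mrange P = mrange E" "mnull P = mnull E"
  shows "P = E"
proof -
  have "P *v x = E *v x" for x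
  proof -
    have "P *v x \<in> mrange E" using assms(3) by (auto simp: mrange_def)
    then obtain y where y: "P *v x = E *v y" by (auto simp: mrange_def)
    have e: "E *v (P *v x) = P *v x" using y assms(2) by (metis matrix_vector_mul_assoc)
    have "P *v (x - P *v x) = 0"
      using assms(1) by (simp add: matrix_vector_mult_diff_distrib matrix_vector_mul_assoc)
    then have "x - P *v x \<in> mnull E" using assms(4) by (auto simp: mnull_def)
    then have "E *v x = E *v (P *v x)"
      by (simp add: mnull_def matrix_vector_mult_diff_distrib)
    then show ?thesis using e by simp
  qed
  then show ?thesis by (simp add: matrix_eq)
qed

lemma range_AM:
  fixes A M :: "complex^'n^'n"
  assumes "A ** M ** A = A"
  shows "mrange (A ** M) = mrange A"
proof
  show "mrange (A ** M) \<subseteq> mrange A"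
    by (auto simp: mrange_def simp flip: matrix_vector_mul_assoc)
  show "mrange A \<subseteq> mrange (A ** M)"
  proof
    fix v assume "v \<in> mrange A"
    then obtain x where "v = A *v x" by (auto simp: mrange_def)
    then have "v = (A ** M) *v (A *v x)" using assms by (simp add: matrix_vector_mul_assoc)
    then show "v \<in> mrange (A ** M)" by (auto simp: mrange_def)
  qed
qed

lemma null_GA:
  fixes A G :: "complex^'n^'n"
  assumes "A ** G ** A = A"
  shows "mnull (G ** A) = mnull A"
proof
  show "mnull A \<subseteq> mnull (G ** A)"
    by (auto simp: mnull_def simp flip: matrix_vector_mul_assoc)
  show "mnull (G ** A) \<subseteq> mnull A"
  proof
    fix x assume "x \<in> mnull (G ** A)"
    then have "(G ** A) *v x = 0" by (simp add: mnull_def)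
    then have "A *v ((G ** A) *v x) = 0" by simp
    then have "A *v x = 0" using assms by (simp add: matrix_vector_mul_assoc matrix_mul_assoc)
    then show "x \<in> mnull A" by (simp add: mnull_def)
  qed
qed

lemma null_X:
  fixes A G M :: "complex^'n^'n"
  assumes "A ** G ** A = A"
  shows "mnull (G ** A ** M) = mnull (A ** M)"
  using null_GA[OF assms] by (auto simp: mnull_def simp flip: matrix_vector_mul_assoc)

lemma range_X:
  fixes A G M :: "complex^'n^'n"
  assumes "A ** M ** A = A"
  shows "mrange (G ** A ** M) = mrange (G ** A)"
proof -
  have "mrange (G ** (A ** M)) = (\<lambda>v. G *v v) ` mrange (A ** M)"
    by (simp add: mrange_def image_comp o_def matrix_vector_mul_assoc)
  also have "\<dots> = (\<lambda>v. G *v v) ` mrange A" using range_AM[OF assms] by simp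
  also have "\<dots> = mrange (G ** A)" by (simp add: mrange_def image_comp o_def matrix_vector_mul_assoc)
  finally show ?thesis by (simp add: matrix_mul_assoc)
qed

lemma GD_1: "G \<in> GDinv A \<Longrightarrow> A ** G ** A = A"
  by (simp add: GDinv_def)

theorem theorem2p15:
  fixes A B :: "complex^'n^'n"
  defines "c1 \<equiv> gd1_le A B"
    and "c2 \<equiv> (\<exists>M \<in> inv1 A. \<exists>G \<in> GDinv A. A = A ** M ** B \<and> A = B ** G ** A)"
    and "c3 \<equiv> (\<exists>X \<in> GD1inv A. A = A ** X ** B \<and> A = B ** X ** A)"
    and "c4 \<equiv> (\<exists>M \<in> inv1 A. \<exists>G \<in> GDinv A. \<exists>P Q.
              idempotent_mat P \<and> idempotent_mat Q \<and>
              mrange P = mrange A \<and> mnull P = mnull (A ** M) \<and>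
              mrange Q = mrange (G ** A) \<and> mnull Q = mnull A \<and>
              A = P ** B \<and> A = B ** Q)"
    and "c5 \<equiv> (\<exists>X \<in> GD1inv A. \<exists>P Q.
              idempotent_mat P \<and> idempotent_mat Q \<and>
              mrange P = mrange A \<and> mnull P = mnull X \<and>
              mrange Q = mrange X \<and> mnull Q = mnull A \<and>
              A = P ** B \<and> A = B ** Q)"
  shows "(c1 \<longleftrightarrow> c2) \<and> (c1 \<longleftrightarrow> c3) \<and> (c1 \<longleftrightarrow> c4) \<and> (c1 \<longleftrightarrow> c5)"
proof -
  have 13: "c3" if "c1"
  proof -
    from that obtain X where X: "X \<in> GD1inv A" "A ** X = B ** X" "X ** A = X ** B"
      by (auto simp: c1_def gd1_le_def)
    then obtain G M where GM: "X = G ** A ** M" "G \<in> GDinv A" "M \<in> inv1 A"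
      by (auto simp: GD1inv_def)
    have g: "A ** G ** A = A" using GD_1[OF GM(2)] .
    have m: "A ** M ** A = A" using GM(3) by (simp add: inv1_def)
    have "A ** X ** A = (A ** G ** A) ** M ** A" by (simp add: GM(1) matrix_mul_assoc)
    then have AXA: "A ** X ** A = A" using g m by simp
    have "A ** X ** B = A ** (X ** B)" by (simp add: matrix_mul_assoc)
    also have "\<dots> = A ** (X ** A)" using X(3) by simp
    also have "\<dots> = A" using AXA by (simp add: matrix_mul_assoc)
    finally have "A = A ** X ** B" by simp
    moreover have "A = B ** X ** A" using AXA X(2) by simp
    ultimately show ?thesis using X(1) by (auto simp: c3_def)
  qed
  have 32: "c2" if "c3"
  proof -
    from that obtain X where X: "X \<in> GD1inv A" "A = A ** X ** B" "A = B ** X ** A"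
      by (auto simp: c3_def)
    then obtain G M where GM: "X = G ** A ** M" "G \<in> GDinv A" "M \<in> inv1 A"
      by (auto simp: GD1inv_def)
    have g: "A ** G ** A = A" using GD_1[OF GM(2)] .
    have m: "A ** M ** A = A" using GM(3) by (simp add: inv1_def)
    have "A ** X ** B = (A ** G ** A) ** M ** B" by (simp add: GM(1) matrix_mul_assoc)
    then have "A = A ** M ** B" using X(2) g by simp
    moreover have "B ** X ** A = B ** G ** (A ** M ** A)" by (simp add: GM(1) matrix_mul_assoc)
    then have "A = B ** G ** A" using X(3) m by simp
    ultimately show ?thesis using GM by (auto simp: c2_def)
  qed
  have 21: "c1" if "c2"
  proof -
    from that obtain M G where GM: "M \<in> inv1 A" "G \<in> GDinv A" "A = A ** M ** B" "A = B ** G ** A"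
      by (auto simp: c2_def)
    have g: "A ** G ** A = A" using GD_1[OF GM(2)] .
    have m: "A ** M ** A = A" using GM(1) by (simp add: inv1_def)
    define X where "X = G ** A ** M"
    have X: "X \<in> GD1inv A" using GM X_def by (auto simp: GD1inv_def)
    have "A ** X = A ** M" unfolding X_def using g by (simp add: matrix_mul_assoc)
    moreover have "B ** X = (B ** G ** A) ** M" unfolding X_def by (simp add: matrix_mul_assoc)
    ultimately have e1: "A ** X = B ** X" using GM(4) by simp
    have "X ** A = G ** (A ** M ** A)" unfolding X_def by (simp add: matrix_mul_assoc)
    then have "X ** A = G ** A" using m by simp
    moreover have "X ** B = G ** (A ** M ** B)" unfolding X_def by (simp add: matrix_mul_assoc)
    ultimately have "X ** A = X ** B" using GM(3) by simp
    then show ?thesis using X e1 by (auto simp: c1_def gd1_le_def)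
  qed
  have 24: "c4 \<and> c5" if "c2"
  proof -
    from that obtain M G where GM: "M \<in> inv1 A" "G \<in> GDinv A" "A = A ** M ** B" "A = B ** G ** A"
      by (auto simp: c2_def)
    have g: "A ** G ** A = A" using GD_1[OF GM(2)] .
    have m: "A ** M ** A = A" using GM(1) by (simp add: inv1_def)
    have "A ** M ** (A ** M) = (A ** M ** A) ** M" by (simp add: matrix_mul_assoc)
    then have iP: "idempotent_mat (A ** M)" unfolding idempotent_mat_def using m by simp
    have "G ** A ** (G ** A) = G ** (A ** G ** A)" by (simp add: matrix_mul_assoc)
    then have iQ: "idempotent_mat (G ** A)" unfolding idempotent_mat_def using g by simp
    have B1: "A = (A ** M) ** B" using GM(3) by simp
    have B2: "A = B ** (G ** A)" using GM(4) by (simp add: matrix_mul_assoc)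
    have C4: "c4" unfolding c4_def
      apply (rule bexI[OF _ GM(1)], rule bexI[OF _ GM(2)])
      apply (rule exI[of _ "A ** M"], rule exI[of _ "G ** A"])
      using iP iQ range_AM[OF m] null_GA[OF g] B1 B2 by simp
    have X: "G ** A ** M \<in> GD1inv A" using GM by (auto simp: GD1inv_def)
    have "c5" unfolding c5_def
      apply (rule bexI[OF _ X])
      apply (rule exI[of _ "A ** M"], rule exI[of _ "G ** A"])
      using iP iQ range_AM[OF m] null_GA[OF g] null_X[OF g] range_X[OF m] B1 B2
      by simp
    then show ?thesis using C4 by blast
  qed
  have key: "c2" if M: "M \<in> inv1 A" and G: "G \<in> GDinv A" and
     P: "idempotent_mat P" "mrange P = mrange A" "mnull P = mnull (A ** M)"
     and Q: "idempotent_mat Q" "mrange Q = mrange (G ** A)" "mnull Q = mnull A"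
     and AB: "A = P ** B" "A = B ** Q" for M G P Q
  proof -
    have g: "A ** G ** A = A" using GD_1[OF G] .
    have m: "A ** M ** A = A" using M by (simp add: inv1_def)
    have "A ** M ** (A ** M) = (A ** M ** A) ** M" by (simp add: matrix_mul_assoc)
    then have iP: "A ** M ** (A ** M) = A ** M" using m by simp
    have "G ** A ** (G ** A) = G ** (A ** G ** A)" by (simp add: matrix_mul_assoc)
    then have iQ: "G ** A ** (G ** A) = G ** A" using g by simp
    have "P = A ** M" using idem_eq[OF _ iP] P range_AM[OF m] by (simp add: idempotent_mat_def)
    moreover have "Q = G ** A" using idem_eq[OF _ iQ] Q null_GA[OF g] by (simp add: idempotent_mat_def)
    ultimately have "A = A ** M ** B" "A = B ** G ** A" using AB by (simp_all add: matrix_mul_assoc)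
    then show ?thesis using M G unfolding c2_def by blast
  qed
  have 42: "c2" if "c4" using that key unfolding c4_def by blast
  have 52: "c2" if "c5"
  proof -
    from that obtain X P Q where X: "X \<in> GD1inv A" and PQ: "idempotent_mat P" "idempotent_mat Q"
      "mrange P = mrange A" "mnull P = mnull X" "mrange Q = mrange X" "mnull Q = mnull A"
      "A = P ** B" "A = B ** Q" unfolding c5_def by blast
    then obtain G M where GM: "X = G ** A ** M" "G \<in> GDinv A" "M \<in> inv1 A"
      by (auto simp: GD1inv_def)
    have g: "A ** G ** A = A" using GD_1[OF GM(2)] .
    have m: "A ** M ** A = A" using GM(3) by (simp add: inv1_def)
    show ?thesis using key[OF GM(3) GM(2) PQ(1) PQ(3) _ PQ(2) _ PQ(6-8)]
      PQ(4,5) GM(1) null_X[OF g] range_X[OF m] by simp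
  qed
  show ?thesis using 13 32 21 24 42 52 by blast
qed

end
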